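(* Every finite nonempty set of negative integers is the signed degree set of some connected signed bipartite graph.
   Context: A signed bipartite graph $G(U,V)$ is a finite simple bipartite graph with bipartition $U, V$ (both nonempty, every edge joining a vertex of $U$ to a vertex of $V$) in which each edge is assigned a sign, positive or negative. The signed degree of a vertex $x$ is $\mathrm{sdeg}(x) = d^+(x) - d^-(x)$, where $d^+(x)$ (resp. $d^-(x)$) is the number of positive (resp. negative) edges incident with $x$. The signed degree set of $G(U,V)$ is the set of distinct signed degrees of its vertices. $G(U,V)$ is called connected if each vertex of $U$ is connected (by a path) to every vertex of $V$. *)

theory Defs
  imports Main
begin

text \<open>Simplicity: each such pair carries at most one edge,
i.e. P and N are disjoint.\<close>

definition signed_bipartite :: "'v set \<Rightarrow> 'v set \<Rightarrow> ('v \<times> 'v) set \<Rightarrow> ('v \<times> 'v) set \<Rightarrow> bool" where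
  "signed_bipartite U V P N \<longleftrightarrow>
     finite U \<and> finite V \<and> U \<noteq> {} \<and> V \<noteq> {} \<and> U \<inter> V = {} \<and>
     P \<subseteq> U \<times> V \<and> N \<subseteq> U \<times> V \<and> P \<inter> N = {}"

definition inc_deg :: "('v \<times> 'v) set \<Rightarrow> 'v \<Rightarrow> nat" where
  "inc_deg E x = card {y. (x, y) \<in> E \<or> (y, x) \<in> E}"

definition sdeg :: "('v \<times> 'v) set \<Rightarrow> ('v \<times> 'v) set \<Rightarrow> 'v \<Rightarrow> int" where
  "sdeg P N x = int (inc_deg P x) - int (inc_deg N x)"

definition signed_degree_set :: "'v set \<Rightarrow> 'v set \<Rightarrow> ('v \<times> 'v) set \<Rightarrow> ('v \<times> 'v) set \<Rightarrow> int set" where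
  "signed_degree_set U V P N = sdeg P N ` (U \<union> V)"

definition adj :: "('v \<times> 'v) set \<Rightarrow> ('v \<times> 'v) set \<Rightarrow> 'v \<Rightarrow> 'v \<Rightarrow> bool" where
  "adj P N x y \<longleftrightarrow> (x, y) \<in> P \<union> N \<or> (y, x) \<in> P \<union> N"

definition sb_connected :: "'v set \<Rightarrow> 'v set \<Rightarrow> ('v \<times> 'v) set \<Rightarrow> ('v \<times> 'v) set \<Rightarrow> bool" where
  "sb_connected U V P N \<longleftrightarrow> (\<forall>u\<in>U. \<forall>v\<in>V. (adj P N)\<^sup>*\<^sup>* u v)"

end

theory Submission
  imports Defs
begin

lemma c_mono: "finite A \<Longrightarrow> x \<le> y \<Longrightarrow> card {a\<in>A. a < x} \<le> card {a\<in>A. a < (y::nat)}"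
  by (rule card_mono) auto

lemma c_strict:
  assumes "finite A" "a \<in> A" "a < y" "x \<le> a"
  shows "card {b\<in>A. b < x} < card {b\<in>A. b < (y::nat)}"
proof (rule psubset_card_mono)
  show "finite {b\<in>A. b < y}" using assms(1) by simp
  have "{b\<in>A. b < x} \<subseteq> {b\<in>A. b < y}" using assms(3,4) by auto
  moreover have "a \<in> {b\<in>A. b < y}" "a \<notin> {b\<in>A. b < x}" using assms(2,3,4) by auto
  ultimately show "{b\<in>A. b < x} \<subset> {b\<in>A. b < y}" by blast
qed

lemma c_lt:
  assumes "finite A" "A \<noteq> {}" "x \<le> Max A"
  shows "card {b\<in>A. b < (x::nat)} < card A"
proof (rule psubset_card_mono)
  show "finite A" by fact
  have "Max A \<in> A" using Max_in assms(1,2) by blast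
  moreover have "Max A \<notin> {b\<in>A. b < x}" using assms(3) by auto
  ultimately show "{b\<in>A. b < x} \<subset> A" by blast
qed

lemma c_surj:
  assumes fin: "finite A" and ne: "A \<noteq> {}"
  shows "(\<lambda>x. card {b\<in>A. b < (x::nat)}) ` A = {..<card A}"
proof -
  let ?c = "\<lambda>x. card {b\<in>A. b < (x::nat)}"
  have inj: "inj_on ?c A"
  proof (rule inj_onI)
    fix x y assume xy: "x \<in> A" "y \<in> A" "?c x = ?c y"
    show "x = y"
    proof (rule ccontr)
      assume "x \<noteq> y"
      then consider "x < y" | "y < x" by linarith
      then show False
      proof cases
        case 1 then show False using c_strict[OF fin xy(1), of y x] xy by simp
      next
        case 2 then show False using c_strict[OF fin xy(2), of x y] xy by simp
      qed
    qed
  qed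
  have sub: "?c ` A \<subseteq> {..<card A}"
    using c_lt[OF fin ne] fin by auto
  have "card (?c ` A) = card {..<card A}" using card_image[OF inj] by simp
  then show ?thesis using card_subset_eq[OF _ sub] by simp
qed

lemma key:
  fixes A :: "nat set"
  assumes fin: "finite A" and a: "a \<in> A" and pos: "\<forall>x\<in>A. 0 < x"
  shows "{j\<in>{1..Max A}. card {b\<in>A. b < j} < card {b\<in>A. b < a} + 1} = {1..a}"
proof -
  have am: "a \<le> Max A" using fin a by simp
  show ?thesis
  proof (rule set_eqI, rule iffI)
    fix j assume "j \<in> {j\<in>{1..Max A}. card {b\<in>A. b < j} < card {b\<in>A. b < a} + 1}"
    then have j: "1 \<le> j" "card {b\<in>A. b < j} \<le> card {b\<in>A. b < a}" by auto
    have "j \<le> a"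
    proof (rule ccontr)
      assume "\<not> j \<le> a"
      then have "a < j" by simp
      then show False using c_strict[OF fin a, of j a] j by simp
    qed
    then show "j \<in> {1..a}" using j by simp
  next
    fix j assume "j \<in> {1..a}"
    then show "j \<in> {j\<in>{1..Max A}. card {b\<in>A. b < j} < card {b\<in>A. b < a} + 1}"
      using c_mono[OF fin, of j a] am by auto
  qed
qed

lemma degset:
  fixes A :: "nat set"
  assumes fin: "finite A" and ne: "A \<noteq> {}" and pos: "\<forall>x\<in>A. 0 < x"
  shows "(\<lambda>i. card {j\<in>{1..Max A}. card {b\<in>A. b < i} + card {b\<in>A. b < j} < card A}) ` {1..Max A} = A"
proof -
  let ?c = "\<lambda>x. card {b\<in>A. b < (x::nat)}"
  let ?m = "Max A" and ?n = "card A"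
  have eq: "{j\<in>{1..?m}. ?c i + ?c j < ?n} = {1..a}" if "a \<in> A" "?c a = ?n - 1 - ?c i" "i \<le> ?m" for i a
  proof -
    have "?c i < ?n" using c_lt[OF fin ne that(3)] .
    then have "{j\<in>{1..?m}. ?c i + ?c j < ?n} = {j\<in>{1..?m}. ?c j < ?c a + 1}"
      using that(2) by auto
    then show ?thesis using key[OF fin that(1) pos] by simp
  qed
  show ?thesis
  proof
    show "(\<lambda>i. card {j\<in>{1..?m}. ?c i + ?c j < ?n}) ` {1..?m} \<subseteq> A"
    proof
      fix x assume "x \<in> (\<lambda>i. card {j\<in>{1..?m}. ?c i + ?c j < ?n}) ` {1..?m}"
      then obtain i where i: "i \<in> {1..?m}" "x = card {j\<in>{1..?m}. ?c i + ?c j < ?n}" by auto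
      have "?n - 1 - ?c i \<in> {..<?n}" using c_lt[OF fin ne] i fin ne by (auto simp: card_gt_0_iff)
      then have "?n - 1 - ?c i \<in> ?c ` A" using c_surj[OF fin ne] by simp
      then obtain a where a2: "?n - 1 - ?c i = ?c a" and a1: "a \<in> A" by (rule imageE)
      have a: "a \<in> A" "?c a = ?n - 1 - ?c i" using a1 a2 by simp_all
      show "x \<in> A" using eq[OF a] i a(1) by simp
    qed
  next
    show "A \<subseteq> (\<lambda>i. card {j\<in>{1..?m}. ?c i + ?c j < ?n}) ` {1..?m}"
    proof
      fix a assume a: "a \<in> A"
      have "?n - 1 - ?c a \<in> {..<?n}" using c_lt[OF fin ne] a fin ne by (auto simp: card_gt_0_iff)
      then have "?n - 1 - ?c a \<in> ?c ` A" using c_surj[OF fin ne] by simp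
      then obtain b where b2: "?n - 1 - ?c a = ?c b" and b1: "b \<in> A" by (rule imageE)
      have b: "b \<in> A" "?c b = ?n - 1 - ?c a" using b1 b2 by simp_all
      have ca: "?c a < ?n" using c_lt[OF fin ne, of a] a fin by simp
      have cb: "?c b < ?n" using c_lt[OF fin ne, of b] b(1) fin by simp
      have bm: "b \<in> {1..?m}" using b pos fin by (auto simp: Suc_le_eq)
      have "?c a = ?n - 1 - ?c b" using b(2) ca cb by linarith
      then have "card {j\<in>{1..?m}. ?c b + ?c j < ?n} = a" using eq[OF a _] bm by simp
      then show "a \<in> (\<lambda>i. card {j\<in>{1..?m}. ?c i + ?c j < ?n}) ` {1..?m}" using bm by force
    qed
  qed
qed

theorem corollary2p1:
  fixes S :: "int set"
  assumes "finite S" and "S \<noteq> {}" and "\<forall>s\<in>S. s < 0"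
  shows "\<exists>(U :: nat set) V P N. signed_bipartite U V P N \<and> sb_connected U V P N
           \<and> signed_degree_set U V P N = S"
proof -
  define A where "A = (\<lambda>s. nat (- s)) ` S"
  have finA: "finite A" using assms(1) by (simp add: A_def)
  have neA: "A \<noteq> {}" using assms(2) by (simp add: A_def)
  have pos: "\<forall>x\<in>A. 0 < x" using assms(3) by (auto simp: A_def)
  have "(\<lambda>a. - int a) ` A = (\<lambda>s. - int (nat (- s))) ` S" by (simp add: A_def image_image)
  also have "\<dots> = id ` S" by (rule image_cong) (use assms(3) in auto)
  finally have S_eq: "S = (\<lambda>a. - int a) ` A" by simp
  define m where "m = Max A"
  define n where "n = card A"
  define c where "c = (\<lambda>x. card {b\<in>A. b < (x::nat)})"
  define d where "d = (\<lambda>i. card {j\<in>{1..m}. c i + c j < n})"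
  have deg: "d ` {1..m} = A" using degset[OF finA neA pos] by (simp add: d_def c_def m_def n_def)
  have "0 < Max A" using Max_in[OF finA neA] pos by blast
  then have m1: "1 \<le> m" unfolding m_def by simp
  have c1: "c 1 = 0" using pos unfolding c_def by auto
  have clt: "c x < n" if "x \<le> m" for x using c_lt[OF finA neA] that by (simp add: c_def n_def m_def)
  define N where "N = {(i, m + j) | i j. i \<in> {1..m} \<and> j \<in> {1..m} \<and> c i + c j < n}"
  define U where "U = {1..m}"
  define V where "V = (\<lambda>j. m + j) ` {1..m}"
  have degU: "inc_deg N i = d i" if i: "i \<in> {1..m}" for i
  proof -
    have "{y. (i, y) \<in> N \<or> (y, i) \<in> N} = (\<lambda>j. m + j) ` {j\<in>{1..m}. c i + c j < n}"
      using i by (auto simp: N_def)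
    moreover have "inj_on (\<lambda>j. m + j) {j\<in>{1..m}. c i + c j < n}" by (simp add: inj_on_def)
    ultimately show ?thesis unfolding inc_deg_def d_def by (simp add: card_image)
  qed
  have degV: "inc_deg N (m + j) = d j" if j: "j \<in> {1..m}" for j
  proof -
    have "{y. (m + j, y) \<in> N \<or> (y, m + j) \<in> N} = {i\<in>{1..m}. c i + c j < n}"
      using j by (auto simp: N_def)
    also have "\<dots> = {i\<in>{1..m}. c j + c i < n}" by (simp add: add.commute)
    finally show ?thesis unfolding inc_deg_def d_def by simp
  qed
  have sd: "sdeg {} N x = - int (inc_deg N x)" for x by (simp add: sdeg_def inc_deg_def)
  show ?thesis
  proof (intro exI conjI)
    show "signed_bipartite U V {} N"
      unfolding signed_bipartite_def U_def V_def N_def using m1 by auto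
    show "sb_connected U V {} N"
      unfolding sb_connected_def
    proof (intro ballI)
      fix u v assume u: "u \<in> U" and v: "v \<in> V"
      from v obtain j where jv: "v = m + j" and jm: "j \<in> {1..m}" unfolding V_def by (rule imageE)
      note j = jm jv
      have um: "u \<le> m" using u by (simp add: U_def)
      have a1: "adj {} N u (m + 1)" unfolding adj_def N_def using u m1 clt[OF um] c1
        by (auto simp: U_def)
      have a2: "adj {} N (m + 1) 1" unfolding adj_def N_def using m1 clt[OF m1] c1 by auto
      have a3: "adj {} N 1 (m + j)" unfolding adj_def N_def using j m1 clt[of j] c1 by auto
      have "(adj {} N)\<^sup>*\<^sup>* 1 (m + j)" using a3 by auto
      then have "(adj {} N)\<^sup>*\<^sup>* (m + 1) (m + j)" using a2 by (rule converse_rtranclp_into_rtranclp[rotated])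
      then have "(adj {} N)\<^sup>*\<^sup>* u (m + j)" using a1 by (rule converse_rtranclp_into_rtranclp[rotated])
      then show "(adj {} N)\<^sup>*\<^sup>* u v" using j by simp
    qed
    have e1: "sdeg {} N ` U = (\<lambda>a. - int a) ` (d ` {1..m})"
      unfolding U_def image_image using degU sd by (intro image_cong) auto
    have e2: "sdeg {} N ` V = (\<lambda>a. - int a) ` (d ` {1..m})"
      unfolding V_def image_image using degV sd by (intro image_cong) auto
    show "signed_degree_set U V {} N = S"
      unfolding signed_degree_set_def image_Un e1 e2 deg S_eq by simp
  qed
qed

end
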